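(* Let $\beta_1,\beta_2,P_D,R_{th},r_C,r_D>0$, and write $a=R_{th}/r_C$. Suppose $$r_C>2R_{th}\qquad\text{and}\qquad \beta_1\ln\big((1-2a)r_D\big)-\beta_2P_D\,a\ge 0.$$ Define - $c_1=\min\Big\{\underline{c},\ \dfrac{\beta_1\ln((1-2a)r_D)-\beta_2 aP_D}{1-2a}\Big\}$, - $c_2=\dfrac{\beta_2P_D}{2}+\dfrac{\beta_1\beta_2P_D}{\beta_2P_D-2\beta_1}$, - $\overline{c}=\dfrac{\beta_2P_D}{2}+\beta_1 r_D\,e^{-\left(1+\frac{\beta_2P_D}{2\beta_1}\right)}$, - $\underline{c}=\dfrac{\beta_2P_D}{2}+\dfrac{\beta_1 r_C}{r_C-2R_{th}}$. Let $$\mathcal{C}=\begin{cases}\{c_1,c_2\}, & \text{if } \underline{c}<c_2<\overline{c},\\ \{c_1\}, & \text{if } \overline{c}<\underline{c},\\ \{c_1,\overline{c},\underline{c}\}, & \text{otherwise,}\end{cases}$$ and $c^*=\arg\max_{c\in\mathcal{C}}U_C(\alpha^*(c),c)$. Then $(c^*,\alpha^*(c^* ))$ is the Stackelberg equilibrium. That is, $\alpha^*(\cdot)$ is the follower's best response, and $c^*$ solves the leader's problem $$\max_{c}\ U_C(\alpha^*(c),c)\quad\text{s.t.}\quad U_D(\alpha^*(c),c)\ge 0,\qquad c\ge 0 .$$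
   Context: Setting: a cell-edge user (CEU, the leader) charges price $c$ to a D2D pair (the follower). The D2D pair then chooses its TDMA allocation coefficient $\alpha\in(0,1/2)$. Two time fractions of length $\alpha$ are used to relay the CEU's data, and the remaining fraction $1-2\alpha$ is used for D2D transmission. Rates: - $r_C=\min\{\log_2(1+P_Ch_{ib}/N_0),\ \log_2(1+P_Ch_{ib}/N_0+P_Dg_{jb}/N_0)\}>0$. - The CEU rate is $R_C(\alpha)=\alpha r_C$. - $r_D=\log_2(1+P_Dg_j/N_0)>0$. - The D2D rate is $(1-2\alpha)r_D$. - $R_{th}>0$ is the CEU's rate requirement. Utilities: - D2D pair: $U_D(\alpha,c)=\beta_1\ln\big((1-2\alpha)r_D\big)-\beta_2P_D\alpha-c(1-2\alpha)$. - CEU: $U_C(\alpha,c)=\beta_1\ln(\alpha r_C)+c(1-2\alpha)$. Follower's best response: $\alpha^*(c)$ maximizes $U_D(\alpha,c)$ subject to $\alpha r_C\ge R_{th}$ and $0<\alpha<1/2$. Explicitly, $$\alpha^*(c)=\frac{R_{th}}{r_C}\quad\text{if } c\le \frac{\beta_2P_D}{2}+\frac{\beta_1 r_C}{r_C-2R_{th}},$$ and $\alpha^*(c)=\frac12-\frac{\beta_1}{2c-\beta_2P_D}$ otherwise. *)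

theory Defs
  imports Complex_Main
begin

definition U_D :: "real \<Rightarrow> real \<Rightarrow> real \<Rightarrow> real \<Rightarrow> real \<Rightarrow> real \<Rightarrow> real" where
  "U_D b1 b2 PD rD \<alpha> c = b1 * ln ((1 - 2*\<alpha>) * rD) - b2 * PD * \<alpha> - c * (1 - 2*\<alpha>)"

definition U_C :: "real \<Rightarrow> real \<Rightarrow> real \<Rightarrow> real \<Rightarrow> real" where
  "U_C b1 rC \<alpha> c = b1 * ln (\<alpha> * rC) + c * (1 - 2*\<alpha>)"

definition c_low :: "real \<Rightarrow> real \<Rightarrow> real \<Rightarrow> real \<Rightarrow> real \<Rightarrow> real" where
  "c_low b1 b2 PD Rth rC = b2 * PD / 2 + b1 * rC / (rC - 2*Rth)"

definition c_up :: "real \<Rightarrow> real \<Rightarrow> real \<Rightarrow> real \<Rightarrow> real" where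
  "c_up b1 b2 PD rD = b2 * PD / 2 + b1 * rD * exp (- (1 + b2 * PD / (2*b1)))"

definition c_two :: "real \<Rightarrow> real \<Rightarrow> real \<Rightarrow> real" where
  "c_two b1 b2 PD = b2 * PD / 2 + b1 * b2 * PD / (b2 * PD - 2*b1)"

definition c_one :: "real \<Rightarrow> real \<Rightarrow> real \<Rightarrow> real \<Rightarrow> real \<Rightarrow> real \<Rightarrow> real" where
  "c_one b1 b2 PD Rth rC rD =
     (let a = Rth / rC in
      min (c_low b1 b2 PD Rth rC) ((b1 * ln ((1 - 2*a) * rD) - b2 * a * PD) / (1 - 2*a)))"

definition alpha_star :: "real \<Rightarrow> real \<Rightarrow> real \<Rightarrow> real \<Rightarrow> real \<Rightarrow> real \<Rightarrow> real" where
  "alpha_star b1 b2 PD Rth rC c =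
     (if c \<le> c_low b1 b2 PD Rth rC then Rth / rC
      else 1/2 - b1 / (2*c - b2 * PD))"

definition cand_set :: "real \<Rightarrow> real \<Rightarrow> real \<Rightarrow> real \<Rightarrow> real \<Rightarrow> real \<Rightarrow> real set" where
  "cand_set b1 b2 PD Rth rC rD =
     (let cl = c_low b1 b2 PD Rth rC; cu = c_up b1 b2 PD rD;
          c1 = c_one b1 b2 PD Rth rC rD; c2 = c_two b1 b2 PD in
      if cl < c2 \<and> c2 < cu then {c1, c2}
      else if cu < cl then {c1}
      else {c1, cu, cl})"

end

theory Submission
  imports Defs
begin

lemma ln_diff_le:
  fixes x y :: real assumes "0 < x" "0 < y" shows "ln x - ln y \<le> x/y - 1"
proof -
  have "ln x - ln y = ln (x/y)" using assms by (simp add: ln_div)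
  also have "\<dots> \<le> x/y - 1" using assms by (intro ln_le_minus_one) simp
  finally show ?thesis .
qed

lemma UD_tangent:
  assumes "b1 > 0" "rD > 0" "\<alpha> < 1/2" "\<beta> < 1/2"
  shows "U_D b1 b2 PD rD \<alpha> c \<le> U_D b1 b2 PD rD \<beta> c + (\<alpha> - \<beta>) * (2*c - b2*PD - 2*b1/(1 - 2*\<beta>))"
proof -
  define q where "q = 2*b1/(1 - 2*\<beta>)"
  have x: "(1-2*\<alpha>)*rD > 0" "(1-2*\<beta>)*rD > 0" using assms by auto
  have "ln ((1-2*\<alpha>)*rD) - ln ((1-2*\<beta>)*rD) \<le> ((1-2*\<alpha>)*rD) / ((1-2*\<beta>)*rD) - 1"
    using x by (rule ln_diff_le)
  also have "\<dots> = 2*(\<beta> - \<alpha>)/(1-2*\<beta>)" using assms by (simp add: field_simps)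
  finally have "b1 * (ln ((1-2*\<alpha>)*rD) - ln ((1-2*\<beta>)*rD)) \<le> b1 * (2*(\<beta> - \<alpha>)/(1-2*\<beta>))"
    using assms(1) by (intro mult_left_mono) auto
  moreover have "b1 * (2*(\<beta> - \<alpha>)/(1-2*\<beta>)) = - (\<alpha> - \<beta>) * q" unfolding q_def by (simp add: field_simps)
  moreover have "b1 * (ln ((1-2*\<alpha>)*rD) - ln ((1-2*\<beta>)*rD)) = b1 * ln ((1-2*\<alpha>)*rD) - b1 * ln ((1-2*\<beta>)*rD)"
    by (simp add: right_diff_distrib)
  ultimately have h: "b1 * ln ((1-2*\<alpha>)*rD) - b1 * ln ((1-2*\<beta>)*rD) \<le> - (\<alpha> - \<beta>) * q"
    by linarith
  show ?thesis unfolding U_D_def q_def[symmetric] using h by (simp add: algebra_simps)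
qed

lemma UC_tangent:
  assumes "b1 > 0" "rC > 0" "\<alpha> > 0" "\<beta> > 0"
  shows "U_C b1 rC \<alpha> c \<le> U_C b1 rC \<beta> c' + b1*(\<alpha> - \<beta>)/\<beta> + c*(1-2*\<alpha>) - c'*(1-2*\<beta>)"
proof -
  have x: "\<alpha>*rC > 0" "\<beta>*rC > 0" using assms by auto
  have "ln (\<alpha>*rC) - ln (\<beta>*rC) \<le> (\<alpha>*rC) / (\<beta>*rC) - 1"
    using x by (rule ln_diff_le)
  also have "\<dots> = (\<alpha> - \<beta>)/\<beta>" using assms by (simp add: field_simps)
  finally have "b1 * (ln (\<alpha>*rC) - ln (\<beta>*rC)) \<le> b1 * ((\<alpha> - \<beta>)/\<beta>)"
    using assms(1) by (intro mult_left_mono) auto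
  then show ?thesis unfolding U_C_def by (simp add: algebra_simps)
qed


theorem theorem1:
  fixes b1 b2 PD Rth rC rD cstar :: real
  assumes pos: "b1 > 0" "b2 > 0" "PD > 0" "Rth > 0" "rC > 0" "rD > 0"
    and hr: "rC > 2 * Rth"
    and hnn: "b1 * ln ((1 - 2 * (Rth / rC)) * rD) - b2 * PD * (Rth / rC) \<ge> 0"
    and hcand: "cstar \<in> cand_set b1 b2 PD Rth rC rD"
    and hmax: "\<forall>c \<in> cand_set b1 b2 PD Rth rC rD.
                 U_C b1 rC (alpha_star b1 b2 PD Rth rC c) c
                 \<le> U_C b1 rC (alpha_star b1 b2 PD Rth rC cstar) cstar"
  shows "(\<forall>c. 0 < alpha_star b1 b2 PD Rth rC c \<and> alpha_star b1 b2 PD Rth rC c < 1/2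
              \<and> alpha_star b1 b2 PD Rth rC c * rC \<ge> Rth
              \<and> (\<forall>\<alpha>. 0 < \<alpha> \<and> \<alpha> < 1/2 \<and> \<alpha> * rC \<ge> Rth \<longrightarrow>
                    U_D b1 b2 PD rD \<alpha> c \<le> U_D b1 b2 PD rD (alpha_star b1 b2 PD Rth rC c) c))
       \<and> cstar \<ge> 0
       \<and> U_D b1 b2 PD rD (alpha_star b1 b2 PD Rth rC cstar) cstar \<ge> 0
       \<and> (\<forall>c. c \<ge> 0 \<and> U_D b1 b2 PD rD (alpha_star b1 b2 PD Rth rC c) c \<ge> 0 \<longrightarrow>
              U_C b1 rC (alpha_star b1 b2 PD Rth rC c) c
              \<le> U_C b1 rC (alpha_star b1 b2 PD Rth rC cstar) cstar)"
proof -
  define a where "a = Rth / rC"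
  define B where "B = b2 * PD"
  define cl where "cl = c_low b1 b2 PD Rth rC"
  define cu where "cu = c_up b1 b2 PD rD"
  define c2 where "c2 = c_two b1 b2 PD"
  define K where "K = b1 * ln ((1 - 2*a) * rD) - B*a"
  define g where "g = (\<lambda>c::real. 1/2 - b1/(2*c - B))"
  define AS where "AS = alpha_star b1 b2 PD Rth rC"
  define UC where "UC = (\<lambda>c. U_C b1 rC (AS c) c)"
  define UD where "UD = (\<lambda>c. U_D b1 b2 PD rD (AS c) c)"
  have B0: "B > 0" using pos unfolding B_def by simp
  have a0: "0 < a" "a < 1/2" using pos hr unfolding a_def by (auto simp: field_simps)
  have K0: "K \<ge> 0" using hnn unfolding K_def a_def B_def by (simp add: algebra_simps)
  have cl_eq: "cl = B/2 + b1/(1-2*a)"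
  proof -
    have "rC / (rC - 2*Rth) = 1/(1-2*a)" using pos hr unfolding a_def by (simp add: field_simps)
    then show ?thesis unfolding cl_def c_low_def B_def by (metis times_divide_eq_right mult.right_neutral)
  qed
  have tl: "2*cl - B = 2*b1/(1-2*a)" unfolding cl_eq using a0 by (simp add: field_simps)
  have tl0: "2*cl - B > 0" unfolding tl using a0 pos by simp
  have gcl: "g cl = a" unfolding g_def tl using a0 pos by (simp add: field_simps)
  have AS_low: "AS c = a" if "c \<le> cl" for c
    using that unfolding AS_def alpha_star_def cl_def a_def by simp
  have AS_high: "AS c = g c" if "cl \<le> c" for c
  proof (cases "c = cl")
    case True then show ?thesis using AS_low gcl by simp
  next
    case False then show ?thesis using that unfolding AS_def alpha_star_def cl_def g_def B_def by auto
  qed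
  have gmono: "g c \<le> g c'" if "B/2 < c" "c \<le> c'" for c c'
  proof -
    have "b1/(2*c' - B) \<le> b1/(2*c - B)" using that pos by (intro divide_left_mono) auto
    then show ?thesis unfolding g_def by simp
  qed
  have gp: "a \<le> g c \<and> g c < 1/2 \<and> 1 - 2*g c = 2*b1/(2*c - B) \<and> 2*c - B > 0" if "cl \<le> c" for c
  proof -
    have "2*c - B > 0" using that tl0 by simp
    moreover have "a \<le> g c" using gmono[of cl c] that tl0 gcl by simp
    moreover have "g c < 1/2" unfolding g_def using calculation pos by simp
    moreover have "1 - 2*g c = 2*b1/(2*c - B)" unfolding g_def using calculation(1) by (simp add: field_simps)
    ultimately show ?thesis by simp
  qed
  have curve: "c*(1-2*g c) = b1 + B*(1 - 2*g c)/2" if "cl \<le> c" for c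
  proof -
    have h: "2*c - B > 0" "1 - 2*g c = 2*b1/(2*c - B)" using gp[OF that] by auto
    show ?thesis unfolding h(2) using h(1) by (simp add: field_simps)
  qed
  have UC_low: "UC c = b1 * ln (a*rC) + c*(1-2*a)" if "c \<le> cl" for c
    unfolding UC_def U_C_def AS_low[OF that] ..
  have UD_low: "UD c = K - c*(1-2*a)" if "c \<le> cl" for c
    unfolding UD_def U_D_def AS_low[OF that] K_def B_def by (simp add: algebra_simps)
  have UD_high: "UD c = b1 * ln (2*b1*rD/(2*c - B)) - B/2 - b1" if "cl \<le> c" for c
  proof -
    have h: "2*c - B > 0" "1 - 2*g c = 2*b1/(2*c - B)" using gp[OF that] by auto
    have "UD c = b1 * ln ((1 - 2*g c)*rD) - B * g c - c*(1-2*g c)"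
      unfolding UD_def U_D_def AS_high[OF that] B_def by simp
    also have "\<dots> = b1 * ln ((1 - 2*g c)*rD) - B * g c - (b1 + B*(1 - 2*g c)/2)"
      using curve[OF that] by simp
    also have "(1 - 2*g c)*rD = 2*b1*rD/(2*c - B)" unfolding h(2) by simp
    finally show ?thesis by (simp add: field_simps)
  qed
  have feas_high: "UD c \<ge> 0 \<longleftrightarrow> c \<le> cu" if "cl \<le> c" for c
  proof -
    define E where "E = exp (1 + B/(2*b1))"
    have E0: "E > 0" unfolding E_def by simp
    have t0: "2*c - B > 0" using gp[OF that] by auto
    have x0: "2*b1*rD/(2*c - B) > 0" using t0 pos by simp
    have ee: "exp (- (1 + B/(2*b1))) = 1/E" unfolding E_def by (simp only: exp_minus inverse_eq_divide)
    have cu_eq: "cu = B/2 + b1*rD/E" unfolding cu_def c_up_def B_def[symmetric] ee by simp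
    have "UD c \<ge> 0 \<longleftrightarrow> ln (2*b1*rD/(2*c - B)) \<ge> 1 + B/(2*b1)"
      unfolding UD_high[OF that] using pos by (simp add: field_simps)
    also have "\<dots> \<longleftrightarrow> E \<le> 2*b1*rD/(2*c - B)"
      unfolding E_def using x0 by (metis exp_le_cancel_iff exp_ln)
    also have "\<dots> \<longleftrightarrow> E*(2*c - B) \<le> 2*b1*rD" using t0 by (simp add: le_divide_eq)
    also have "\<dots> \<longleftrightarrow> c \<le> cu" unfolding cu_eq using E0 by (simp add: field_simps)
    finally show ?thesis .
  qed
  have consist: "cl \<le> cu \<longleftrightarrow> cl \<le> K/(1-2*a)"
  proof -
    have "cl \<le> cu \<longleftrightarrow> UD cl \<ge> 0" using feas_high[of cl] by simp
    also have "\<dots> \<longleftrightarrow> K - cl*(1-2*a) \<ge> 0" using UD_low[of cl] by simp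
    also have "\<dots> \<longleftrightarrow> cl \<le> K/(1-2*a)" using a0 by (simp add: field_simps)
    finally show ?thesis .
  qed
  have cmp: "UC c \<le> UC c'" if "cl \<le> c" "cl \<le> c'" "(g c - g c')*(b1/g c' - B) \<le> 0" for c c'
  proof -
    have gc: "g c > 0" "g c' > 0" using gp[OF that(1)] gp[OF that(2)] a0 by auto
    have T: "UC c \<le> UC c' + b1*(g c - g c')/g c' + c*(1-2*g c) - c'*(1-2*g c')"
      unfolding UC_def AS_high[OF that(1)] AS_high[OF that(2)]
      by (rule UC_tangent[OF pos(1) pos(5) gc])
    have e1: "c*(1-2*g c) - c'*(1-2*g c') = - ((g c - g c')*B)"
      unfolding curve[OF that(1)] curve[OF that(2)] by (simp add: field_simps)
    have e2: "b1*(g c - g c')/g c' = (g c - g c')*(b1/g c')" by simp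
    have e3: "(g c - g c')*(b1/g c' - B) = (g c - g c')*(b1/g c') - (g c - g c')*B"
      by (simp add: right_diff_distrib)
    show ?thesis using T e1 e2 e3 that(3) by linarith
  qed
  have c2_big: "B > 2*b1 \<Longrightarrow> c2 > B/2 \<and> g c2 = b1/B"
  proof -
    assume h: "B > 2*b1"
    have c2e: "c2 = B/2 + b1*B/(B - 2*b1)" unfolding c2_def c_two_def B_def by simp
    have "b1*B/(B - 2*b1) > 0" using h pos B0 by simp
    moreover have "g c2 = b1/B" unfolding g_def c2e using h B0 pos by (simp add: field_simps)
    ultimately show ?thesis unfolding c2e by simp
  qed
  have c2_small: "B \<le> 2*b1 \<Longrightarrow> c2 \<le> B/2"
  proof -
    assume h: "B \<le> 2*b1"
    have c2e: "c2 = B/2 + b1*B/(B - 2*b1)" unfolding c2_def c_two_def B_def by simp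
    have "b1*B/(B - 2*b1) \<le> 0" using h pos B0 by (intro divide_nonneg_nonpos) auto
    then show ?thesis unfolding c2e by linarith
  qed
  have part1: "0 < AS c \<and> AS c < 1/2 \<and> AS c * rC \<ge> Rth
      \<and> (\<forall>\<alpha>. 0 < \<alpha> \<and> \<alpha> < 1/2 \<and> \<alpha> * rC \<ge> Rth \<longrightarrow> U_D b1 b2 PD rD \<alpha> c \<le> U_D b1 b2 PD rD (AS c) c)" for c
  proof -
    have rng: "a \<le> AS c \<and> AS c < 1/2"
    proof (cases "c \<le> cl")
      case True then show ?thesis using AS_low a0 by simp
    next
      case False then show ?thesis using AS_high gp by simp
    qed
    have aR: "\<alpha> * rC \<ge> Rth \<longleftrightarrow> a \<le> \<alpha>" for \<alpha> unfolding a_def using pos by (simp add: field_simps)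
    have opt: "U_D b1 b2 PD rD \<alpha> c \<le> U_D b1 b2 PD rD (AS c) c" if "a \<le> \<alpha>" "\<alpha> < 1/2" for \<alpha>
    proof -
      have T: "U_D b1 b2 PD rD \<alpha> c \<le> U_D b1 b2 PD rD (AS c) c + (\<alpha> - AS c) * (2*c - B - 2*b1/(1 - 2*AS c))"
        unfolding B_def using UD_tangent[OF pos(1) pos(6) that(2)] rng by simp
      have "(\<alpha> - AS c) * (2*c - B - 2*b1/(1 - 2*AS c)) \<le> 0"
      proof (cases "c \<le> cl")
        case True
        have "2*c - B - 2*b1/(1 - 2*AS c) = 2*(c - cl)" unfolding AS_low[OF True] tl[symmetric] by simp
        then show ?thesis using True that AS_low[OF True] by (simp add: mult_nonneg_nonpos)
      next
        case False
        then have h: "2*c - B > 0" "1 - 2*g c = 2*b1/(2*c - B)" using gp[of c] by auto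
        have ASc: "AS c = g c" using AS_high False by simp
        have "2*b1/(1 - 2*AS c) = 2*c - B" unfolding ASc h(2) using h(1) pos by (simp add: field_simps)
        then show ?thesis by simp
      qed
      then show ?thesis using T by simp
    qed
    show ?thesis using rng a0 opt aR by auto
  qed
  define F where "F = {c. c \<ge> 0 \<and> UD c \<ge> 0}"
  define c1 where "c1 = c_one b1 b2 PD Rth rC rD"
  have c1e: "c1 = min cl (K/(1-2*a))"
    unfolding c1_def c_one_def cl_def K_def a_def B_def Let_def by (simp add: algebra_simps)
  have cand: "cand_set b1 b2 PD Rth rC rD =
      (if cl < c2 \<and> c2 < cu then {c1, c2} else if cu < cl then {c1} else {c1, cu, cl})"
    unfolding cand_set_def cl_def cu_def c1_def c2_def Let_def ..
  have cl0: "cl > 0" using tl0 B0 by simp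
  have low_feas: "c \<in> F" if "0 \<le> c" "c \<le> K/(1-2*a)" "c \<le> cl" for c
    using that UD_low[OF that(3)] a0 unfolding F_def by (simp add: field_simps)
  have high_feas: "c \<in> F" if "cl \<le> c" "c \<le> cu" for c
    using that feas_high[OF that(1)] cl0 unfolding F_def by simp
  have mono_low: "UC c \<le> UC c'" if "c \<le> c'" "c' \<le> cl" for c c'
  proof -
    have h: "c \<le> cl" using that by simp
    have "c*(1-2*a) \<le> c'*(1-2*a)" using that a0 by (intro mult_right_mono) auto
    then show ?thesis unfolding UC_low[OF that(2)] UC_low[OF h] by simp
  qed
  have main: "\<exists>m \<in> cand_set b1 b2 PD Rth rC rD. \<forall>c\<in>F. UC c \<le> UC m"
    and sub: "cand_set b1 b2 PD Rth rC rD \<subseteq> F"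
  proof -
    have "(\<exists>m \<in> cand_set b1 b2 PD Rth rC rD. \<forall>c\<in>F. UC c \<le> UC m) \<and> cand_set b1 b2 PD Rth rC rD \<subseteq> F"
    proof (cases "cu < cl")
      case True
      then have nA: "\<not> (cl < c2 \<and> c2 < cu)" by auto
      have c1v: "c1 = K/(1-2*a)" using True consist c1e by auto
      have c1F: "c1 \<in> F" using low_feas[of c1] K0 a0 c1v c1e by simp
      have "\<forall>c\<in>F. UC c \<le> UC c1"
      proof
        fix c assume "c \<in> F"
        then have cF: "c \<ge> 0" "UD c \<ge> 0" unfolding F_def by auto
        have "c \<le> cl"
        proof (rule ccontr)
          assume "\<not> c \<le> cl" then show False using feas_high[of c] cF True by simp
        qed
        then have "c*(1-2*a) \<le> K" using cF UD_low[of c] by simp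
        then have "c \<le> c1" using a0 c1v by (simp add: pos_le_divide_eq)
        then show "UC c \<le> UC c1" using mono_low c1e by simp
      qed
      then show ?thesis unfolding cand using True nA c1F by auto
    next
      case False
      then have c1v: "c1 = cl" using consist c1e by auto
      have clF: "cl \<in> F" using high_feas[of cl] False by simp
      have cuF: "cu \<in> F" using high_feas[of cu] False by simp
      have below: "UC c \<le> UC cl" if "c \<le> cl" for c using mono_low that by simp
      show ?thesis
      proof (cases "cl < c2 \<and> c2 < cu")
        case True
        have Bb: "B > 2*b1"
        proof (rule ccontr)
          assume "\<not> B > 2*b1" then have "c2 \<le> B/2" using c2_small by simp
          then show False using True tl0 by simp
        qed
        have gc2: "g c2 = b1/B" using c2_big Bb by simp
        have z: "b1/g c2 - B = 0" using gc2 pos B0 by simp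
        have c2F: "c2 \<in> F" using high_feas[of c2] True by simp
        have clc2: "UC cl \<le> UC c2" using cmp[of cl c2] True z by simp
        have "\<forall>c\<in>F. UC c \<le> UC c2"
        proof
          fix c assume "c \<in> F"
          show "UC c \<le> UC c2"
          proof (cases "c \<le> cl")
            case True then show ?thesis using below clc2 by (meson order_trans)
          next
            case False then show ?thesis using cmp[of c c2] \<open>cl < c2 \<and> c2 < cu\<close> z by simp
          qed
        qed
        then show ?thesis unfolding cand using True c1v clF c2F by auto
      next
        case nA: False
        have cand': "cand_set b1 b2 PD Rth rC rD = {cl, cu}" unfolding cand using nA False c1v by auto
        show ?thesis
        proof (cases "B \<le> 2*b1 \<or> cu \<le> c2")
          case True
          have gcu0: "g cu > 0" using gp[of cu] False a0 by simp
          have gcu: "g cu \<le> b1/B"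
          proof (cases "B \<le> 2*b1")
            case True
            have "1/2 \<le> b1/B" using True B0 by (simp add: field_simps)
            moreover have "g cu < 1/2" using gp[of cu] False by simp
            ultimately show ?thesis by linarith
          next
            case Bb: False
            then have "cu \<le> c2" using True by simp
            then show ?thesis using gmono[of cu c2] c2_big Bb False tl0 by simp
          qed
          have fac: "b1/g cu - B \<ge> 0"
          proof -
            have "B * g cu \<le> b1" using gcu B0 by (simp add: field_simps)
            then show ?thesis using gcu0 by (simp add: field_simps)
          qed
          have clcu: "UC cl \<le> UC cu"
            using cmp[of cl cu] False gmono[of cl cu] tl0 fac by (simp add: mult_nonpos_nonneg)
          have "\<forall>c\<in>F. UC c \<le> UC cu"
          proof
            fix c assume cF: "c \<in> F"
            show "UC c \<le> UC cu"
            proof (cases "c \<le> cl")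
              case True then show ?thesis using below clcu by (meson order_trans)
            next
              case cg: False
              then have "c \<le> cu" using feas_high[of c] cF unfolding F_def by simp
              then show ?thesis using cmp[of c cu] cg False gmono[of c cu] tl0 fac
                by (simp add: mult_nonpos_nonneg)
            qed
          qed
          then show ?thesis unfolding cand' using clF cuF by auto
        next
          case nB: False
          then have Bb: "B > 2*b1" and c2cl: "c2 \<le> cl" using nA by auto
          have "b1/B \<le> a" using gmono[of c2 cl] c2_big[OF Bb] c2cl gcl by simp
          then have fac: "b1/g cl - B \<le> 0" using gcl a0 B0 by (simp add: field_simps)
          have "\<forall>c\<in>F. UC c \<le> UC cl"
          proof
            fix c assume cF: "c \<in> F"
            show "UC c \<le> UC cl"
            proof (cases "c \<le> cl")
              case True then show ?thesis using below by simp
            next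
              case cg: False
              then show ?thesis using cmp[of c cl] gmono[of cl c] tl0 fac
                by (simp add: mult_nonneg_nonpos)
            qed
          qed
          then show ?thesis unfolding cand' using clF cuF by auto
        qed
      qed
    qed
    then show "\<exists>m \<in> cand_set b1 b2 PD Rth rC rD. \<forall>c\<in>F. UC c \<le> UC m"
      and "cand_set b1 b2 PD Rth rC rD \<subseteq> F" by auto
  qed
  obtain m where m: "m \<in> cand_set b1 b2 PD Rth rC rD" "\<forall>c\<in>F. UC c \<le> UC m" using main by blast
  have csF: "cstar \<in> F" using sub hcand by auto
  have best: "UC c \<le> UC cstar" if "c \<in> F" for c
  proof -
    have "UC c \<le> UC m" using m(2) that by blast
    also have "UC m \<le> UC cstar" using hmax m(1) unfolding UC_def AS_def by blast
    finally show ?thesis .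
  qed
  show ?thesis
    using part1 csF best unfolding F_def UC_def UD_def AS_def by auto
qed

end
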